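(* $E_{range}<_{\mathrm{Learn}}E_3$: every $E_{range}$-learnable family of structures is $E_3$-learnable, and there is a family that is $E_3$-learnable but not $E_{range}$-learnable.
   Context: All structures are countable, have domain $\mathbb{N}$, are in a finite relational signature, and are identified with their atomic diagrams (elements of $2^{\mathbb{N}}$). A family of structures is a countable set of pairwise nonisomorphic such structures. $\mathrm{LD}(\mathfrak{K})\subseteq 2^{\mathbb{N}}$ is the set of structures with domain $\mathbb{N}$ isomorphic to a member of $\mathfrak{K}$ (subspace topology). For an equivalence relation $E$ on a space $X$, $\mathfrak{K}$ is $E$-learnable if there is a continuous $\Gamma:\mathrm{LD}(\mathfrak{K})\to X$ with $\mathcal{S}\cong\mathcal{S}'\iff\Gamma(\mathcal{S})\,E\,\Gamma(\mathcal{S}')$ for all $\mathcal{S},\mathcal{S}'\in\mathrm{LD}(\mathfrak{K})$. On Baire space: $p\,E_0\,q\iff\exists m\,\forall n\ge m\ p(n)=q(n)$; $p\,E_{range}\,q\iff\{p(m):m\}=\{q(m):m\}$. Fix a computable bijection $\langle\cdot,\cdot\rangle:\mathbb{N}^2\to\mathbb{N}$; for $p\in\mathbb{N}^{\mathbb{N}\times\mathbb{N}}$ the $m$-th column is $p^{[m]}(n)=p(\langle m,n\rangle)$, and $p\,E_3\,q\iff\forall m\ p^{[m]}\,E_0\,q^{[m]}$. $X\leq_{\mathrm{Learn}}Y$ means every $X$-learnable family is $Y$-learnable; $<_{\mathrm{Learn}}$ means $\leq_{\mathrm{Learn}}$ and not the converse. *)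

theory Defs
  imports "HOL-Analysis.Analysis" "HOL-Library.Nat_Bijection"
begin

text \<open>A finite relational signature is given by the list of arities of its relation symbols.
  A structure with domain nat is identified with its atomic diagram, an element of 2^nat:
  bit n holds iff the atomic fact coded by n is true, where n codes the pair (i, xs)
  (relation symbol i applied to tuple xs) via the computable bijection
  prod_encode (i, list_encode xs).\<close>

type_synonym signature = "nat list"
type_synonym diagram = "nat \<Rightarrow> bool"

definition atom_code :: "nat \<Rightarrow> nat list \<Rightarrow> nat" where
  "atom_code i xs = prod_encode (i, list_encode xs)"

definition well_formed_code :: "signature \<Rightarrow> nat \<Rightarrow> bool" where
  "well_formed_code sig n \<longleftrightarrow>
     (\<exists>i xs. i < length sig \<and> length xs = sig ! i \<and> n = atom_code i xs)"

definition Structures :: "signature \<Rightarrow> diagram set" where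
  "Structures sig = {D. \<forall>n. D n \<longrightarrow> well_formed_code sig n}"

definition iso :: "signature \<Rightarrow> diagram \<Rightarrow> diagram \<Rightarrow> bool" where
  "iso sig A B \<longleftrightarrow> (\<exists>f :: nat \<Rightarrow> nat. bij f \<and>
     (\<forall>i < length sig. \<forall>xs. length xs = sig ! i \<longrightarrow>
        (A (atom_code i xs) \<longleftrightarrow> B (atom_code i (map f xs)))))"

definition family :: "signature \<Rightarrow> diagram set \<Rightarrow> bool" where
  "family sig K \<longleftrightarrow> K \<subseteq> Structures sig \<and> countable K \<and>
     (\<forall>A\<in>K. \<forall>B\<in>K. A \<noteq> B \<longrightarrow> \<not> iso sig A B)"

definition LD :: "signature \<Rightarrow> diagram set \<Rightarrow> diagram set" where
  "LD sig K = {S \<in> Structures sig. \<exists>A\<in>K. iso sig S A}"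

definition cantor_top :: "(nat \<Rightarrow> bool) topology" where
  "cantor_top = product_topology (\<lambda>_. discrete_topology UNIV) UNIV"

definition baire_top :: "(nat \<Rightarrow> nat) topology" where
  "baire_top = product_topology (\<lambda>_. discrete_topology UNIV) UNIV"

definition learnable ::
  "signature \<Rightarrow> diagram set \<Rightarrow> 'a topology \<Rightarrow> ('a \<Rightarrow> 'a \<Rightarrow> bool) \<Rightarrow> bool" where
  "learnable sig K X E \<longleftrightarrow> (\<exists>\<Gamma>. continuous_map (subtopology cantor_top (LD sig K)) X \<Gamma> \<and>
     (\<forall>S\<in>LD sig K. \<forall>S'\<in>LD sig K. iso sig S S' \<longleftrightarrow> E (\<Gamma> S) (\<Gamma> S')))"

definition E0 :: "(nat \<Rightarrow> nat) \<Rightarrow> (nat \<Rightarrow> nat) \<Rightarrow> bool" where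
  "E0 p q \<longleftrightarrow> (\<exists>m. \<forall>n\<ge>m. p n = q n)"

definition E_range :: "(nat \<Rightarrow> nat) \<Rightarrow> (nat \<Rightarrow> nat) \<Rightarrow> bool" where
  "E_range p q \<longleftrightarrow> range p = range q"

definition column :: "(nat \<Rightarrow> nat) \<Rightarrow> nat \<Rightarrow> (nat \<Rightarrow> nat)" where
  "column p m = (\<lambda>n. p (prod_encode (m, n)))"

definition E3 :: "(nat \<Rightarrow> nat) \<Rightarrow> (nat \<Rightarrow> nat) \<Rightarrow> bool" where
  "E3 p q \<longleftrightarrow> (\<forall>m. E0 (column p m) (column q m))"

definition learn_le ::
  "'a topology \<Rightarrow> ('a \<Rightarrow> 'a \<Rightarrow> bool) \<Rightarrow> 'b topology \<Rightarrow> ('b \<Rightarrow> 'b \<Rightarrow> bool) \<Rightarrow> bool" where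
  "learn_le X E Y F \<longleftrightarrow>
     (\<forall>sig K. family sig K \<longrightarrow> learnable sig K X E \<longrightarrow> learnable sig K Y F)"

end

theory Submission
  imports Defs
begin


lemma openin_cyl:
  fixes p :: "'a \<Rightarrow> 'b"
  assumes "finite C"
  shows "openin (product_topology (\<lambda>_. discrete_topology UNIV) UNIV) {q. \<forall>c\<in>C. q c = p c}"
proof -
  have e: "{q. \<forall>c\<in>C. q c = p c} = Pi\<^sub>E UNIV (\<lambda>c. if c \<in> C then {p c} else UNIV)"
    by (auto simp: PiE_iff) (metis singletonD)
  have "{i. (if i \<in> C then {p i} else UNIV) \<noteq> UNIV} \<subseteq> C" by auto
  hence "finite {i. (if i \<in> C then {p i} else UNIV) \<noteq> UNIV}" using assms finite_subset by blast
  thus ?thesis unfolding e by (subst openin_PiE_gen) auto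
qed

lemma cont_finite_dep:
  fixes g :: "('a \<Rightarrow> 'b) \<Rightarrow> ('c \<Rightarrow> 'd)"
  assumes "\<And>k. \<exists>C. finite C \<and> (\<forall>p q. (\<forall>c\<in>C. p c = q c) \<longrightarrow> g p k = g q k)"
  shows "continuous_map (product_topology (\<lambda>_. discrete_topology UNIV) UNIV)
           (product_topology (\<lambda>_. discrete_topology UNIV) UNIV) g"
  unfolding continuous_map_componentwise_UNIV
proof
  fix k
  obtain C where C: "finite C" "\<forall>p q. (\<forall>c\<in>C. p c = q c) \<longrightarrow> g p k = g q k" using assms by blast
  show "continuous_map (product_topology (\<lambda>_. discrete_topology UNIV) UNIV) (discrete_topology UNIV) (\<lambda>x. g x k)"
    unfolding continuous_map
  proof (intro conjI allI impI)
    fix U :: "'d set"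
    show "openin (product_topology (\<lambda>_. discrete_topology UNIV) UNIV)
          {x \<in> topspace (product_topology (\<lambda>_. discrete_topology UNIV) UNIV). g x k \<in> U}"
    proof (subst openin_subopen, intro ballI)
      fix x assume x: "x \<in> {x \<in> topspace (product_topology (\<lambda>_. discrete_topology UNIV) UNIV). g x k \<in> U}"
      show "\<exists>T. openin (product_topology (\<lambda>_. discrete_topology UNIV) UNIV) T \<and> x \<in> T \<and>
          T \<subseteq> {x \<in> topspace (product_topology (\<lambda>_. discrete_topology UNIV) UNIV). g x k \<in> U}"
        apply (rule exI[of _ "{q. \<forall>c\<in>C. q c = x c}"])
        using openin_cyl[OF C(1), of x] C(2) x by (auto, metis)
    qed
  qed auto
qed



definition Phi :: "(nat \<Rightarrow> nat) \<Rightarrow> nat \<Rightarrow> nat" where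
  "Phi p j = (case prod_decode j of (k, n) \<Rightarrow> if \<exists>i\<le>n. p i = k then 1 else 0)"

lemma col_Phi: "column (Phi p) k n = (if \<exists>i\<le>n. p i = k then 1 else 0)"
  by (simp add: column_def Phi_def)

lemma Phi_red: "E3 (Phi p) (Phi q) \<longleftrightarrow> E_range p q"
proof
  assume h: "E3 (Phi p) (Phi q)"
  have sub: "range a \<subseteq> range b" if "E3 (Phi a) (Phi b)" for a b
  proof
    fix k assume "k \<in> range a"
    then obtain i where i: "a i = k" by auto
    from that obtain m where m: "\<forall>n\<ge>m. column (Phi a) k n = column (Phi b) k n"
      unfolding E3_def E0_def by blast
    from m[rule_format, of "max m i"] i have "\<exists>i'\<le>max m i. b i' = k"
      by (auto simp: col_Phi split: if_splits)
    thus "k \<in> range b" by auto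
  qed
  have "E3 (Phi q) (Phi p)" using h unfolding E3_def E0_def by metis
  with h sub show "E_range p q" unfolding E_range_def by blast
next
  assume h: "E_range p q"
  show "E3 (Phi p) (Phi q)" unfolding E3_def E0_def
  proof
    fix k
    show "\<exists>m. \<forall>n\<ge>m. column (Phi p) k n = column (Phi q) k n"
    proof (cases "k \<in> range p")
      case True
      then obtain i where i: "p i = k" by auto
      from True h obtain i' where i': "q i' = k" unfolding E_range_def by (metis imageE)
      show ?thesis
        apply (rule exI[of _ "max i i'"])
        using i i' by (auto simp: col_Phi)
    next
      case False
      with h have "k \<notin> range q" unfolding E_range_def by simp
      with False show ?thesis by (auto simp: col_Phi)
    qed
  qed
qed

lemma Phi_cont: "continuous_map baire_top baire_top Phi"
  unfolding baire_top_def
proof (rule cont_finite_dep)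
  fix j
  show "\<exists>C. finite C \<and> (\<forall>p q. (\<forall>c\<in>C. p c = q c) \<longrightarrow> Phi p j = Phi q j)"
    apply (rule exI[of _ "{..snd (prod_decode j)}"])
    by (auto simp: Phi_def split: prod.splits) (metis atMost_iff)+
qed

lemma part1: "learn_le baire_top E_range baire_top E3"
  unfolding learn_le_def learnable_def
proof (intro allI impI)
  fix sig K
  assume "\<exists>\<Gamma>. continuous_map (subtopology cantor_top (LD sig K)) baire_top \<Gamma> \<and>
         (\<forall>S\<in>LD sig K. \<forall>S'\<in>LD sig K. iso sig S S' = E_range (\<Gamma> S) (\<Gamma> S'))"
  then obtain G where G: "continuous_map (subtopology cantor_top (LD sig K)) baire_top G"
    "\<forall>S\<in>LD sig K. \<forall>S'\<in>LD sig K. iso sig S S' = E_range (G S) (G S')" by blast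
  show "\<exists>\<Gamma>. continuous_map (subtopology cantor_top (LD sig K)) baire_top \<Gamma> \<and>
         (\<forall>S\<in>LD sig K. \<forall>S'\<in>LD sig K. iso sig S S' = E3 (\<Gamma> S) (\<Gamma> S'))"
    apply (rule exI[of _ "Phi \<circ> G"])
    using continuous_map_compose[OF G(1) Phi_cont] G(2) Phi_red by auto
qed



lemma atom_code_eq[simp]: "atom_code i xs = atom_code j ys \<longleftrightarrow> i = j \<and> xs = ys"
  by (simp add: atom_code_def list_encode_eq)

lemma le_atom_code: "x \<le> atom_code 0 [x,y]" "y \<le> atom_code 0 [x,y]"
proof -
  have "x \<le> prod_encode (x, list_encode [y])" by (rule le_prod_encode_1)
  also have "\<dots> \<le> list_encode [x,y]" by simp
  also have "\<dots> \<le> atom_code 0 [x,y]" unfolding atom_code_def by (rule le_prod_encode_2)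
  finally show "x \<le> atom_code 0 [x,y]" .
  have "y \<le> prod_encode (y, 0)" by (rule le_prod_encode_1)
  also have "\<dots> \<le> list_encode [y]" by simp
  also have "\<dots> \<le> prod_encode (x, list_encode [y])" by (rule le_prod_encode_2)
  also have "\<dots> \<le> list_encode [x,y]" by simp
  also have "\<dots> \<le> atom_code 0 [x,y]" unfolding atom_code_def by (rule le_prod_encode_2)
  finally show "y \<le> atom_code 0 [x,y]" .
qed

lemma all_len2: "(\<forall>xs::nat list. length xs = 2 \<longrightarrow> P xs) \<longleftrightarrow> (\<forall>x y. P [x,y])"
proof
  assume "\<forall>x y. P [x,y]"
  then show "\<forall>xs::nat list. length xs = 2 \<longrightarrow> P xs"
    by (auto simp: numeral_2_eq_2 length_Suc_conv)
qed auto

lemma iso2: "iso [2] D E \<longleftrightarrow> (\<exists>f. bij f \<and> (\<forall>x y. D (atom_code 0 [x,y]) = E (atom_code 0 [f x, f y])))"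
proof -
  have "(\<forall>i<length [2::nat]. Q i) \<longleftrightarrow> Q 0" for Q by auto
  then show ?thesis unfolding iso_def by (simp add: all_len2)
qed

lemma wf2: "well_formed_code [2] n \<longleftrightarrow> (\<exists>x y. n = atom_code 0 [x,y])"
proof -
  have "(\<exists>i<length [2::nat]. Q i) \<longleftrightarrow> Q 0" for Q by auto
  moreover have "(\<exists>xs::nat list. length xs = 2 \<and> P xs) \<longleftrightarrow> (\<exists>x y. P [x,y])" for P
    by (auto simp: numeral_2_eq_2 length_Suc_conv)
  ultimately show ?thesis unfolding well_formed_code_def by simp
qed

lemma iso_refl: "iso sig A A"
  unfolding iso_def by (rule exI[of _ id]) auto

lemma iso_sym: assumes "iso sig A B" shows "iso sig B A"
proof -
  from assms obtain f where f: "bij f" "\<forall>i<length sig. \<forall>xs. length xs = sig ! i \<longrightarrow>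
        (A (atom_code i xs) \<longleftrightarrow> B (atom_code i (map f xs)))" unfolding iso_def by blast
  show ?thesis unfolding iso_def
  proof (rule exI[of _ "inv f"], intro conjI allI impI)
    show "bij (inv f)" using f(1) by (simp add: bij_imp_bij_inv)
    fix i and xs :: "nat list" assume "i < length sig" "length xs = sig ! i"
    with f(2) have "A (atom_code i (map (inv f) xs)) \<longleftrightarrow> B (atom_code i (map f (map (inv f) xs)))"
      by simp
    moreover have "map f (map (inv f) xs) = xs" using f(1)
      by (simp add: map_idI bij_is_surj surj_f_inv_f)
    ultimately show "B (atom_code i xs) = A (atom_code i (map (inv f) xs))" by simp
  qed
qed

lemma iso_trans: assumes "iso sig A B" "iso sig B C" shows "iso sig A C"
proof -
  from assms(1) obtain f where f: "bij f" "\<forall>i<length sig. \<forall>xs. length xs = sig ! i \<longrightarrow>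
        (A (atom_code i xs) \<longleftrightarrow> B (atom_code i (map f xs)))" unfolding iso_def by blast
  from assms(2) obtain g where g: "bij g" "\<forall>i<length sig. \<forall>xs. length xs = sig ! i \<longrightarrow>
        (B (atom_code i xs) \<longleftrightarrow> C (atom_code i (map g xs)))" unfolding iso_def by blast
  show ?thesis unfolding iso_def
  proof (rule exI[of _ "g \<circ> f"], intro conjI allI impI)
    show "bij (g \<circ> f)" using f(1) g(1) by (simp add: bij_comp)
    fix i and xs :: "nat list" assume "i < length sig" "length xs = sig ! i"
    with f(2) g(2) show "A (atom_code i xs) = C (atom_code i (map (g \<circ> f) xs))" by simp
  qed
qed



definition struc :: "(nat \<Rightarrow> nat) \<Rightarrow> diagram" where
  "struc c = (\<lambda>n. \<exists>x y. n = atom_code 0 [x,y] \<and> c x = c y)"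

lemma struc_code[simp]: "struc c (atom_code 0 [x,y]) \<longleftrightarrow> c x = c y"
  by (auto simp: struc_def)

lemma struc_Structures: "struc c \<in> Structures [2]"
  by (auto simp: Structures_def struc_def wf2)

lemma iso_struc: "bij f \<Longrightarrow> iso [2] (struc (c \<circ> f)) (struc c)"
  by (auto simp: iso2)

lemma iso_strucD: assumes "iso [2] D (struc c)"
  obtains f where "bij f" "\<And>x y. D (atom_code 0 [x,y]) \<longleftrightarrow> c (f x) = c (f y)"
  using assms by (auto simp: iso2)

definition base :: "nat \<Rightarrow> nat" where "base m = fst (prod_decode m) + 2"
definition cA :: "nat \<Rightarrow> nat" where
  "cA n = (if n = 0 then 0 else if n = 1 then 2 else base (n - 2))"
definition cB :: "nat \<Rightarrow> nat" where
  "cB n = (if n \<le> 1 then 0 else base (n - 2))"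

abbreviation "KA \<equiv> struc cA"
abbreviation "KB \<equiv> struc cB"
abbreviation "KK \<equiv> {KA, KB}"

lemma base_ge: "base m \<ge> 2" by (simp add: base_def)
lemma fst_decode_le: "fst (prod_decode m) \<le> m"
  by (metis le_prod_encode_1 prod.collapse prod_decode_inverse)
lemma base_le: "base m \<le> m + 2" using fst_decode_le[of m] by (simp add: base_def)
lemma base_enc: "base (prod_encode (a, b)) = a + 2" by (simp add: base_def)

lemma cA_zero: "cA z = 0 \<longleftrightarrow> z = 0" using base_ge[of "z - 2"] by (auto simp: cA_def)
lemma cB_zero: "cB z = 0 \<longleftrightarrow> z \<le> 1" using base_ge[of "z - 2"] by (auto simp: cB_def)
lemma cA_ne0_ge: "z \<noteq> 0 \<Longrightarrow> cA z \<ge> 2" using base_ge by (simp add: cA_def)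
lemma cB_ge: "z \<ge> 2 \<Longrightarrow> cB z \<ge> 2" using base_ge by (simp add: cB_def)

lemma big_class: assumes "L \<ge> 2" shows "\<exists>z>M. cA z = L \<and> cB z = L"
proof -
  define z where "z = prod_encode (L - 2, M) + 2"
  have "M \<le> prod_encode (L - 2, M)" by (rule le_prod_encode_2)
  hence "z > M" "z \<ge> 2" by (auto simp: z_def)
  moreover have "cA z = L" "cB z = L" using assms \<open>z\<ge>2\<close> by (auto simp: cA_def cB_def z_def base_enc)
  ultimately show ?thesis by blast
qed

lemma partnerA: assumes "w \<noteq> 0" shows "\<exists>z>M. cA z = cA w"
  using big_class[OF cA_ne0_ge[OF assms]] by blast

lemma partnerB: "\<exists>z. z \<noteq> w \<and> cB z = cB w"
proof (cases "w \<le> 1")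
  case True
  then show ?thesis by (intro exI[of _ "1 - w"]) (simp add: cB_def, arith)
next
  case False
  then obtain z where "z > w" "cB z = cB w" using big_class[OF cB_ge, of w w] by auto
  then show ?thesis by auto
qed

lemma not_iso_AB: "\<not> iso [2] KA KB"
proof
  assume "iso [2] KA KB"
  then obtain f where f: "bij f" "\<And>x y. KA (atom_code 0 [x,y]) \<longleftrightarrow> cB (f x) = cB (f y)"
    by (metis iso_strucD)
  obtain w' where w': "w' \<noteq> f 0" "cB w' = cB (f 0)" using partnerB by blast
  obtain y where y: "f y = w'" using f(1) by (metis bij_pointE)
  with w' have "y \<noteq> 0" by (metis)
  from f(2)[of 0 y] y w' have "cA 0 = cA y" by simp
  with \<open>y \<noteq> 0\<close> show False using cA_zero by (metis cA_def)
qed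

lemma family_KK: "family [2] KK"
  unfolding family_def
  using struc_Structures not_iso_AB iso_sym by auto

lemma LD_cases: assumes "D \<in> LD [2] KK" shows "D \<in> Structures [2]" "iso [2] D KA \<or> iso [2] D KB"
  using assms by (auto simp: LD_def)

lemma KA_LD: "KA \<in> LD [2] KK" and KB_LD: "KB \<in> LD [2] KK"
  by (auto simp: LD_def struc_Structures iso_refl)



abbreviation Rel :: "diagram \<Rightarrow> nat \<Rightarrow> nat \<Rightarrow> bool" where
  "Rel D x y \<equiv> D (atom_code 0 [x,y])"

definition Aref :: "diagram \<Rightarrow> nat \<Rightarrow> nat \<Rightarrow> bool" where
  "Aref D s x \<longleftrightarrow> (\<exists>y<s. y \<noteq> x \<and> Rel D x y)"

definition Bref :: "diagram \<Rightarrow> nat \<Rightarrow> nat \<Rightarrow> bool" where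
  "Bref D s j \<longleftrightarrow> \<not> (fst (prod_decode j) \<noteq> snd (prod_decode j) \<and> Rel D (fst (prod_decode j)) (snd (prod_decode j)))
      \<or> (\<exists>y<s. y \<noteq> fst (prod_decode j) \<and> y \<noteq> snd (prod_decode j) \<and> Rel D (fst (prod_decode j)) y)"

definition Gam :: "diagram \<Rightarrow> nat \<Rightarrow> nat" where
  "Gam D s = (if \<exists>x<s. \<not> Aref D s x \<and> (\<forall>j\<le>x. Bref D s j) then 0 else 1)"

lemma Aref_mono: "Aref D s x \<Longrightarrow> s \<le> s' \<Longrightarrow> Aref D s' x"
  unfolding Aref_def by (meson less_le_trans)
lemma Bref_mono: "Bref D s x \<Longrightarrow> s \<le> s' \<Longrightarrow> Bref D s' x"
  unfolding Bref_def by (meson less_le_trans)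

lemma snd_decode_le: "snd (prod_decode m) \<le> m"
  by (metis le_prod_encode_2 prod.collapse prod_decode_inverse)

lemma finite_bound:
  assumes "\<And>j. j < (n::nat) \<Longrightarrow> \<exists>s. P s j"
  shows "\<exists>g. \<forall>j<n. P (g j) j"
  using assms by metis

lemma evA:
  assumes f: "bij f" and R: "\<And>x y. Rel D x y \<longleftrightarrow> cA (f x) = cA (f y)"
  shows "\<exists>s0. \<forall>s\<ge>s0. Gam D s = 0"
proof -
  obtain x0 where x0: "f x0 = 0" using f by (metis bij_pointE)
  have nA: "\<not> Aref D s x0" for s
    unfolding Aref_def using R x0 f cA_zero by (metis bij_pointE)
  have "\<exists>s. Bref D s j" for j
  proof (cases "fst (prod_decode j) \<noteq> snd (prod_decode j) \<and> Rel D (fst (prod_decode j)) (snd (prod_decode j))")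
    case False then show ?thesis unfolding Bref_def by blast
  next
    case True
    define a b where "a = fst (prod_decode j)" "b = snd (prod_decode j)"
    have ab: "a \<noteq> b" "cA (f a) = cA (f b)" using True R by (auto simp: a_b_def)
    have "f a \<noteq> 0"
    proof
      assume "f a = 0"
      then have "cA (f b) = 0" using ab cA_zero[of 0] by simp
      then have "f b = 0" using cA_zero by simp
      with \<open>f a = 0\<close> ab f show False by (metis bij_pointE)
    qed
    obtain z where z: "z > max (f a) (f b)" "cA z = cA (f a)" using partnerA[OF \<open>f a \<noteq> 0\<close>] by blast
    obtain y where y: "f y = z" using f by (metis bij_pointE)
    have "y \<noteq> a" "y \<noteq> b" using y z by auto
    moreover have "Rel D a y" using R y z by simp
    ultimately have "Bref D (Suc y) j" unfolding Bref_def a_b_def[symmetric] by blast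
    then show ?thesis by blast
  qed
  then obtain g where g: "\<forall>j<Suc x0. Bref D (g j) j" using finite_bound[of "Suc x0" "\<lambda>s j. Bref D s j"] by blast
  define s0 where "s0 = Suc x0 + (\<Sum>j<Suc x0. g j)"
  have gle: "g j \<le> s0" if "j < Suc x0" for j
  proof -
    have "g j \<le> (\<Sum>j<Suc x0. g j)" using that by (intro member_le_sum) auto
    thus ?thesis by (simp add: s0_def)
  qed
  show ?thesis
  proof (intro exI allI impI)
    fix s assume "s0 \<le> s"
    have "x0 < s" using \<open>s0 \<le> s\<close> by (simp add: s0_def)
    moreover have "\<forall>j\<le>x0. Bref D s j" using g gle \<open>s0 \<le> s\<close> Bref_mono
      by (metis le_imp_less_Suc order_trans)
    ultimately show "Gam D s = 0" unfolding Gam_def using nA by auto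
  qed
qed

lemma evB:
  assumes f: "bij f" and R: "\<And>x y. Rel D x y \<longleftrightarrow> cB (f x) = cB (f y)"
  shows "\<exists>s0. \<forall>s\<ge>s0. Gam D s = 1"
proof -
  obtain p where p: "f p = 0" using f by (metis bij_pointE)
  obtain q where q: "f q = 1" using f by (metis bij_pointE)
  define j0 where "j0 = prod_encode (p, q)"
  have pq: "p \<noteq> q" using p q by auto
  have nB: "\<not> Bref D s j0" for s
  proof -
    have "Rel D p q" using R p q by (simp add: cB_def)
    moreover have "\<not> Rel D p y" if "y \<noteq> p" "y \<noteq> q" for y
    proof -
      have "f y \<noteq> 0" "f y \<noteq> 1" using that p q f by (metis bij_pointE)+
      then have "cB (f y) \<noteq> 0" using cB_zero by simp
      thus ?thesis using R p cB_zero[of 0] by simp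
    qed
    ultimately show ?thesis unfolding Bref_def j0_def using pq by auto
  qed
  have "\<exists>s. Aref D s x" for x
  proof -
    obtain z where z: "z \<noteq> f x" "cB z = cB (f x)" using partnerB by blast
    obtain y where y: "f y = z" using f by (metis bij_pointE)
    have "y \<noteq> x" "Rel D x y" using y z R by auto
    then have "Aref D (Suc y) x" unfolding Aref_def by blast
    thus ?thesis by blast
  qed
  then obtain g where g: "\<forall>j<j0. Aref D (g j) j" using finite_bound[of j0 "\<lambda>s j. Aref D s j"] by blast
  define s0 where "s0 = (\<Sum>j<j0. g j)"
  have gle: "g j \<le> s0" if "j < j0" for j
    unfolding s0_def using that by (intro member_le_sum) auto
  show ?thesis
  proof (intro exI allI impI)
    fix s assume "s0 \<le> s"
    have "\<not> (\<not> Aref D s x \<and> (\<forall>j\<le>x. Bref D s j))" for x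
    proof (cases "x < j0")
      case True
      then show ?thesis using g gle \<open>s0 \<le> s\<close> Aref_mono by (meson order_trans)
    next
      case False
      then show ?thesis using nB by (meson not_less)
    qed
    then show "Gam D s = 1" unfolding Gam_def by auto
  qed
qed

lemma E3_ev:
  assumes "\<forall>s\<ge>s0. p s = v" "\<forall>s\<ge>s1. q s = w"
  shows "E3 p q \<longleftrightarrow> v = w"
proof
  assume "E3 p q"
  then obtain m where m: "\<forall>n\<ge>m. column p 0 n = column q 0 n" unfolding E3_def E0_def by blast
  define n where "n = max m (max s0 s1)"
  have "n \<le> prod_encode (0, n)" by (rule le_prod_encode_2)
  then have "p (prod_encode (0, n)) = v" "q (prod_encode (0, n)) = w"
    using assms by (auto simp: n_def)
  moreover have "column p 0 n = column q 0 n" using m by (simp add: n_def)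
  ultimately show "v = w" by (simp add: column_def)
next
  assume "v = w"
  show "E3 p q" unfolding E3_def E0_def
  proof
    fix k
    show "\<exists>m. \<forall>n\<ge>m. column p k n = column q k n"
    proof (intro exI allI impI)
      fix n assume "max s0 s1 \<le> n"
      moreover have "n \<le> prod_encode (k, n)" by (rule le_prod_encode_2)
      ultimately show "column p k n = column q k n"
        using assms \<open>v = w\<close> by (simp add: column_def)
    qed
  qed
qed

lemma Gam_dep: assumes "\<forall>x<s. \<forall>y<s. Rel D x y = Rel D' x y" shows "Gam D s = Gam D' s"
proof -
  have a: "Aref D s x = Aref D' s x" if "x < s" for x
    unfolding Aref_def using assms that by auto
  have b: "Bref D s j = Bref D' s j" if "j < s" for j
  proof -
    have "fst (prod_decode j) < s" "snd (prod_decode j) < s"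
      using fst_decode_le[of j] snd_decode_le[of j] that by auto
    then show ?thesis unfolding Bref_def using assms by auto
  qed
  have "(\<exists>x<s. \<not> Aref D s x \<and> (\<forall>j\<le>x. Bref D s j)) \<longleftrightarrow> (\<exists>x<s. \<not> Aref D' s x \<and> (\<forall>j\<le>x. Bref D' s j))"
    using a b by (meson le_less_trans)
  then show ?thesis unfolding Gam_def by simp
qed

lemma Gam_cont: "continuous_map (subtopology cantor_top L) baire_top Gam"
proof -
  have "continuous_map cantor_top baire_top Gam"
    unfolding cantor_top_def baire_top_def
  proof (rule cont_finite_dep)
    fix k
    show "\<exists>C. finite C \<and> (\<forall>p q :: diagram. (\<forall>c\<in>C. p c = q c) \<longrightarrow> Gam p k = Gam q k)"
    proof (intro exI conjI allI impI)
      show "finite ((\<lambda>(x,y). atom_code 0 [x,y]) ` ({..<k} \<times> {..<k}))" by simp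
      fix p q :: diagram assume h: "\<forall>c\<in>(\<lambda>(x,y). atom_code 0 [x,y]) ` ({..<k} \<times> {..<k}). p c = q c"
      show "Gam p k = Gam q k" by (rule Gam_dep) (use h in auto)
    qed
  qed
  then show ?thesis by (rule continuous_map_from_subtopology)
qed

lemma classify: assumes "D \<in> LD [2] KK"
  shows "(iso [2] D KA \<and> (\<exists>s0. \<forall>s\<ge>s0. Gam D s = 0)) \<or> (iso [2] D KB \<and> (\<exists>s0. \<forall>s\<ge>s0. Gam D s = 1))"
proof -
  from LD_cases(2)[OF assms] show ?thesis
  proof
    assume h: "iso [2] D KA"
    then obtain f where "bij f" "\<And>x y. Rel D x y \<longleftrightarrow> cA (f x) = cA (f y)" by (metis iso_strucD)
    with h evA show ?thesis by blast
  next
    assume h: "iso [2] D KB"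
    then obtain f where "bij f" "\<And>x y. Rel D x y \<longleftrightarrow> cB (f x) = cB (f y)" by (metis iso_strucD)
    with h evB show ?thesis by blast
  qed
qed

lemma learnable_E3: "learnable [2] KK baire_top E3"
  unfolding learnable_def
proof (intro exI conjI ballI)
  show "continuous_map (subtopology cantor_top (LD [2] KK)) baire_top Gam" by (rule Gam_cont)
  fix S S' assume S: "S \<in> LD [2] KK" and S': "S' \<in> LD [2] KK"
  have nAB: "\<not> iso [2] KA KB" "\<not> iso [2] KB KA" using not_iso_AB iso_sym by blast+
  from classify[OF S] classify[OF S'] show "iso [2] S S' = E3 (Gam S) (Gam S')"
  proof (elim disjE conjE exE)
    fix s0 s1 assume "iso [2] S KA" "\<forall>s\<ge>s0. Gam S s = 0" "iso [2] S' KA" "\<forall>s\<ge>s1. Gam S' s = 0"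
    then show ?thesis using E3_ev[of s0 "Gam S" 0 s1 "Gam S'" 0] iso_sym iso_trans by blast
  next
    fix s0 s1 assume "iso [2] S KB" "\<forall>s\<ge>s0. Gam S s = 1" "iso [2] S' KB" "\<forall>s\<ge>s1. Gam S' s = 1"
    then show ?thesis using E3_ev[of s0 "Gam S" 1 s1 "Gam S'" 1] iso_sym iso_trans by blast
  next
    fix s0 s1 assume "iso [2] S KA" "\<forall>s\<ge>s0. Gam S s = 0" "iso [2] S' KB" "\<forall>s\<ge>s1. Gam S' s = 1"
    moreover have "\<not> iso [2] S S'" using calculation iso_sym iso_trans nAB by blast
    ultimately show ?thesis using E3_ev[of s0 "Gam S" 0 s1 "Gam S'" 1] by simp
  next
    fix s0 s1 assume "iso [2] S KB" "\<forall>s\<ge>s0. Gam S s = 1" "iso [2] S' KA" "\<forall>s\<ge>s1. Gam S' s = 0"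
    moreover have "\<not> iso [2] S S'" using calculation iso_sym iso_trans nAB by blast
    ultimately show ?thesis using E3_ev[of s0 "Gam S" 1 s1 "Gam S'" 0] by simp
  qed
qed



lemma range_sub:
  assumes G: "continuous_map (subtopology cantor_top L) baire_top G" and X: "X \<in> L"
    and ext: "\<And>N. \<exists>D'\<in>L. range (G D') \<subseteq> range (G Y) \<and> (\<forall>n\<le>N. D' n = X n)"
  shows "range (G X) \<subseteq> range (G Y)"
proof
  fix k assume "k \<in> range (G X)"
  then obtain m where m: "G X m = k" by auto
  have "openin baire_top {p. p m = k}"
  proof -
    have "continuous_map baire_top (discrete_topology UNIV) (\<lambda>p. p m)"
      unfolding baire_top_def by (rule continuous_map_product_projection) simp
    then have "openin baire_top {p \<in> topspace baire_top. p m \<in> {k}}"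
      by (rule openin_continuous_map_preimage) simp
    moreover have "topspace baire_top = UNIV" by (simp add: baire_top_def)
    ultimately show ?thesis by simp
  qed
  then have "openin (subtopology cantor_top L) {D \<in> topspace (subtopology cantor_top L). G D \<in> {p. p m = k}}"
    by (rule openin_continuous_map_preimage[OF G])
  moreover have "topspace cantor_top = UNIV" by (simp add: cantor_top_def)
  ultimately have "openin (subtopology cantor_top L) {D \<in> L. G D m = k}" by simp
  then obtain T where T: "openin cantor_top T" "{D \<in> L. G D m = k} = T \<inter> L"
    by (auto simp: openin_subtopology)
  have "X \<in> T" using T(2) X m by blast
  then obtain U where U: "finite {i. U i \<noteq> UNIV}" "X \<in> Pi\<^sub>E UNIV U" "Pi\<^sub>E UNIV U \<subseteq> T"
    using T(1) unfolding cantor_top_def openin_product_topology_alt by auto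
  define C where "C = {i. U i \<noteq> UNIV}"
  define N where "N = \<Sum>C"
  have cle: "c \<le> N" if "c \<in> C" for c
    unfolding N_def using U(1) that member_le_sum[of c C "\<lambda>x. x"] by (simp add: C_def)
  obtain D' where D': "D' \<in> L" "range (G D') \<subseteq> range (G Y)" "\<forall>n\<le>N. D' n = X n" using ext by blast
  have "D' \<in> Pi\<^sub>E UNIV U"
  proof -
    have "D' i \<in> U i" for i
    proof (cases "i \<in> C")
      case True
      then have "D' i = X i" using D'(3) cle by blast
      then show ?thesis using U(2) by (auto simp: PiE_iff)
    next
      case False then show ?thesis by (simp add: C_def)
    qed
    then show ?thesis by (auto simp: PiE_iff)
  qed
  then have "D' \<in> T \<inter> L" using U(3) D'(1) by blast
  then have "G D' m = k" using T(2) by blast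
  then show "k \<in> range (G Y)" using D'(2) by blast
qed

lemma ext_gen:
  assumes "\<And>x y. x \<le> N \<Longrightarrow> y \<le> N \<Longrightarrow> (c2 (f x) = c2 (f y) \<longleftrightarrow> c1 x = c1 y)" and "n \<le> N"
  shows "struc (c2 \<circ> f) n = struc c1 n"
proof (cases "\<exists>x y. n = atom_code 0 [x,y]")
  case True
  then obtain x y where n: "n = atom_code 0 [x,y]" by blast
  have "x \<le> N" using le_atom_code(1)[of x y] n assms(2) by linarith
  have "y \<le> N" using le_atom_code(2)[where x=x and y=y] n assms(2) by linarith
  then show ?thesis using assms(1) n \<open>x \<le> N\<close> by simp
next
  case False then show ?thesis by (auto simp: struc_def)
qed

definition sw :: "nat \<Rightarrow> nat \<Rightarrow> nat \<Rightarrow> nat" where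
  "sw a b x = (if x = a then b else if x = b then a else x)"

lemma bij_sw: "bij (sw a b)"
proof -
  have "sw a b \<circ> sw a b = id" by (auto simp: sw_def)
  then show ?thesis by (metis o_bij)
qed

lemma in_LD: "bij f \<Longrightarrow> c = cA \<or> c = cB \<Longrightarrow> struc (c \<circ> f) \<in> LD [2] KK"
  unfolding LD_def using struc_Structures iso_struc by blast

lemma extAB: "\<exists>D'\<in>LD [2] KK. iso [2] D' KB \<and> (\<forall>n\<le>N. D' n = KA n)"
proof -
  define z where "z = prod_encode (0, N) + 2"
  have zN: "z > N" using le_prod_encode_2[of N 0] by (simp add: z_def)
  define f where "f = sw 1 z"
  have eq: "cB (f x) = cA x" if "x \<le> N" for x
  proof -
    consider "x = 0" | "x = 1" | "x \<ge> 2" by arith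
    then show ?thesis
    proof cases
      case 1 then show ?thesis using zN by (simp add: f_def sw_def cA_def cB_def z_def)
    next
      case 2 then show ?thesis by (simp add: f_def sw_def cA_def cB_def z_def base_enc)
    next
      case 3 then show ?thesis using zN that by (simp add: f_def sw_def cA_def cB_def)
    qed
  qed
  show ?thesis
  proof (intro bexI conjI allI impI)
    show "struc (cB \<circ> f) \<in> LD [2] KK" by (rule in_LD) (auto simp: f_def bij_sw)
    show "iso [2] (struc (cB \<circ> f)) KB" by (rule iso_struc) (simp add: f_def bij_sw)
    fix n assume "n \<le> N"
    then show "struc (cB \<circ> f) n = KA n" by (rule ext_gen[rotated]) (simp add: eq)
  qed
qed

lemma extBA: "\<exists>D'\<in>LD [2] KK. iso [2] D' KA \<and> (\<forall>n\<le>N. D' n = KB n)"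
proof -
  define u where "u = prod_encode (N + 1, N) + 2"
  define v where "v = prod_encode (N + 1, N + 1) + 2"
  have uN: "u > N + 1" using le_prod_encode_2[of N "N+1"] by (simp add: u_def)
  have vN: "v > N + 1" using le_prod_encode_2[of "N+1" "N+1"] by (simp add: v_def)
  have uv: "u \<noteq> v" by (simp add: u_def v_def)
  define f where "f = sw 0 u \<circ> sw 1 v"
  define g where "g x = (if x \<le> 1 then N + 3 else cB x)" for x
  have eq: "cA (f x) = g x" if "x \<le> N" for x
  proof -
    consider "x = 0" | "x = 1" | "x \<ge> 2" by arith
    then show ?thesis
    proof cases
      case 1 then show ?thesis using vN uN by (simp add: f_def sw_def cA_def g_def u_def base_enc)
    next
      case 2 then show ?thesis using vN uN uv by (simp add: f_def sw_def cA_def g_def v_def base_enc)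
    next
      case 3 then show ?thesis using vN uN that by (simp add: f_def sw_def cA_def cB_def g_def)
    qed
  qed
  have cBle: "cB x \<le> N" if "x \<le> N" "x \<ge> 2" for x
    using base_le[of "x - 2"] that by (simp add: cB_def)
  have geq: "g x = g y \<longleftrightarrow> cB x = cB y" if "x \<le> N" "y \<le> N" for x y
    using cBle[OF that(1)] cBle[OF that(2)] cB_zero[of x] cB_zero[of y] that
    by (auto simp: g_def)
  have bf: "bij f" unfolding f_def by (simp add: bij_sw bij_comp)
  show ?thesis
  proof (intro bexI conjI allI impI)
    show "struc (cA \<circ> f) \<in> LD [2] KK" by (rule in_LD) (auto simp: bf)
    show "iso [2] (struc (cA \<circ> f)) KA" by (rule iso_struc) (simp add: bf)
    fix n assume "n \<le> N"
    then show "struc (cA \<circ> f) n = KB n" by (rule ext_gen[rotated]) (simp add: eq geq)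
  qed
qed

lemma not_learnable: "\<not> learnable [2] KK baire_top E_range"
proof
  assume "learnable [2] KK baire_top E_range"
  then obtain G where G: "continuous_map (subtopology cantor_top (LD [2] KK)) baire_top G"
    "\<forall>S\<in>LD [2] KK. \<forall>S'\<in>LD [2] KK. iso [2] S S' = E_range (G S) (G S')"
    unfolding learnable_def by blast
  have "range (G KA) \<subseteq> range (G KB)"
  proof (rule range_sub[OF G(1) KA_LD])
    fix N
    obtain D' where D': "D' \<in> LD [2] KK" "iso [2] D' KB" "\<forall>n\<le>N. D' n = KA n" using extAB by blast
    have "E_range (G D') (G KB)" using G(2) D' KB_LD by blast
    then have "range (G D') = range (G KB)" by (simp add: E_range_def)
    then show "\<exists>D'\<in>LD [2] KK. range (G D') \<subseteq> range (G KB) \<and> (\<forall>n\<le>N. D' n = KA n)"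
      using D' by blast
  qed
  moreover have "range (G KB) \<subseteq> range (G KA)"
  proof (rule range_sub[OF G(1) KB_LD])
    fix N
    obtain D' where D': "D' \<in> LD [2] KK" "iso [2] D' KA" "\<forall>n\<le>N. D' n = KB n" using extBA by blast
    have "E_range (G D') (G KA)" using G(2) D' KA_LD by blast
    then have "range (G D') = range (G KA)" by (simp add: E_range_def)
    then show "\<exists>D'\<in>LD [2] KK. range (G D') \<subseteq> range (G KA) \<and> (\<forall>n\<le>N. D' n = KB n)"
      using D' by blast
  qed
  ultimately have "E_range (G KA) (G KB)" by (simp add: E_range_def)
  then have "iso [2] KA KB" using G(2) KA_LD KB_LD by blast
  then show False using not_iso_AB by blast
qed

theorem mainTheorem9:
  shows "learn_le baire_top E_range baire_top E3 \<and>
         \<not> learn_le baire_top E3 baire_top E_range"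
proof
  show "learn_le baire_top E_range baire_top E3" by (rule part1)
  show "\<not> learn_le baire_top E3 baire_top E_range"
    unfolding learn_le_def using family_KK learnable_E3 not_learnable by blast
qed

end
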